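(* Let $(\Omega,P,J)$ be a NAP-space. Then $\ker(J)$ is a fine ideal of $\mathfrak F(\mathcal P_{fin}(\Omega),\mathbb R)$.
   Context: Let $\Omega$ be a nonempty set, $\mathcal P_{fin}(\Omega)$ the set of finite subsets of $\Omega$, and $\mathfrak F=\mathfrak F(\mathcal P_{fin}(\Omega),\mathbb R)$ the real algebra of all functions $\mathcal P_{fin}(\Omega)\to\mathbb R$ with pointwise operations. For $\omega\in\Omega$, $\chi_\lambda(\omega)=1$ if $\omega\in\lambda$ and $0$ otherwise. An ideal $I$ of $\mathfrak F$ is fine if it is maximal and, for every $\omega\in\Omega$, $\lambda\mapsto1-\chi_\lambda(\omega)$ belongs to $I$. A superreal field is an ordered field containing $\mathbb R$ as an ordered subfield. A NAP-space $(\Omega,P,J)$ consists of a superreal field $\mathcal R$, a function $P:\mathcal P(\Omega)\to\mathcal R$ and an algebra homomorphism $J:\mathfrak F\to\mathcal R$ such that: (NAP1) $P(A)\ge0$ for all $A\subseteq\Omega$; (NAP2) $P(A)=1$ iff $A=\Omega$; (NAP3) $P(A\cup B)=P(A)+P(B)$ whenever $A\cap B=\varnothing$; (NAP4) writing $P(A\mid B)=P(A\cap B)/P(B)$ for $B\neq\varnothing$, one has $P(A\mid\lambda)\in\mathbb R$ for every nonempty finite $\lambda$ and every $A$, and $P(A)=J(\varphi_A)$ for every $A\subseteq\Omega$, where $\varphi_A(\lambda)=P(A\mid\lambda)$ for nonempty finite $\lambda$ (and $\varphi_A(\varnothing)$ is an arbitrary fixed real value). *)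

theory Defs
  imports Complex_Main "HOL-Library.FSet"
begin

text \<open>The algebra F(P_fin(Omega), R): functions from finite subsets of Omega (type 'a fset)
  to the reals, with pointwise operations (written out explicitly below).\<close>

definition chi :: "'a fset \<Rightarrow> 'a \<Rightarrow> real" where
  "chi l w = (if w |\<in>| l then 1 else 0)"

definition fin_ideal :: "('a fset \<Rightarrow> real) set \<Rightarrow> bool" where
  "fin_ideal I \<longleftrightarrow>
     (\<lambda>_. 0) \<in> I \<and>
     (\<forall>f\<in>I. \<forall>g\<in>I. (\<lambda>l. f l + g l) \<in> I) \<and>
     (\<forall>f\<in>I. \<forall>h. (\<lambda>l. h l * f l) \<in> I)"

definition maximal_fin_ideal :: "('a fset \<Rightarrow> real) set \<Rightarrow> bool" where
  "maximal_fin_ideal I \<longleftrightarrow> fin_ideal I \<and> I \<noteq> UNIV \<and>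
     (\<forall>K. fin_ideal K \<and> I \<subseteq> K \<longrightarrow> K = I \<or> K = UNIV)"

definition fine_ideal :: "('a fset \<Rightarrow> real) set \<Rightarrow> bool" where
  "fine_ideal I \<longleftrightarrow> maximal_fin_ideal I \<and> (\<forall>w. (\<lambda>l. 1 - chi l w) \<in> I)"

definition superreal_emb :: "(real \<Rightarrow> 'r::linordered_field) \<Rightarrow> bool" where
  "superreal_emb e \<longleftrightarrow> e 1 = 1 \<and>
     (\<forall>x y. e (x + y) = e x + e y \<and> e (x * y) = e x * e y \<and> (e x \<le> e y \<longleftrightarrow> x \<le> y))"

definition alg_hom :: "(real \<Rightarrow> 'r::linordered_field) \<Rightarrow> (('a fset \<Rightarrow> real) \<Rightarrow> 'r) \<Rightarrow> bool" where
  "alg_hom e J \<longleftrightarrow>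
     J (\<lambda>_. 1) = 1 \<and>
     (\<forall>f g. J (\<lambda>l. f l + g l) = J f + J g) \<and>
     (\<forall>f g. J (\<lambda>l. f l * g l) = J f * J g) \<and>
     (\<forall>r f. J (\<lambda>l. r * f l) = e r * J f)"

definition cond_prob :: "('a set \<Rightarrow> 'r::linordered_field) \<Rightarrow> 'a set \<Rightarrow> 'a set \<Rightarrow> 'r" where
  "cond_prob P A B = P (A \<inter> B) / P B"

definition phi :: "(real \<Rightarrow> 'r::linordered_field) \<Rightarrow> ('a set \<Rightarrow> 'r) \<Rightarrow> real \<Rightarrow> 'a set \<Rightarrow> 'a fset \<Rightarrow> real" where
  "phi e P c A l = (if l = {||} then c else (THE r. e r = cond_prob P A (fset l)))"

definition NAP_space :: "(real \<Rightarrow> 'r::linordered_field) \<Rightarrow> ('a set \<Rightarrow> 'r) \<Rightarrow> (('a fset \<Rightarrow> real) \<Rightarrow> 'r) \<Rightarrow> real \<Rightarrow> bool" where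
  "NAP_space e P J c \<longleftrightarrow>
     superreal_emb e \<and> alg_hom e J \<and>
     (\<forall>A. P A \<ge> 0) \<and>
     (\<forall>A. P A = 1 \<longleftrightarrow> A = UNIV) \<and>
     (\<forall>A B. A \<inter> B = {} \<longrightarrow> P (A \<union> B) = P A + P B) \<and>
     (\<forall>l A. l \<noteq> {||} \<longrightarrow> cond_prob P A (fset l) \<in> range e) \<and>
     (\<forall>A. P A = J (phi e P c A))"

end

theory Submission
  imports Defs
begin

theorem mainTheorem7:
  fixes e :: "real \<Rightarrow> 'r::linordered_field"
    and P :: "'a set \<Rightarrow> 'r"
    and J :: "('a fset \<Rightarrow> real) \<Rightarrow> 'r"
    and c :: real
  assumes "NAP_space e P J c"
  shows "fine_ideal {f. J f = 0}"
proof -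
  have S: "superreal_emb e" and H: "alg_hom e J"
    and PU: "\<And>B. P B = 1 \<longleftrightarrow> B = UNIV"
    and Padd: "\<And>B C. B \<inter> C = {} \<Longrightarrow> P (B \<union> C) = P B + P C"
    and PJ: "\<And>B. P B = J (phi e P c B)"
    using assms unfolding NAP_space_def by auto
  have e1: "e 1 = 1" using S unfolding superreal_emb_def by (elim conjE)
  have eadd: "\<And>x y. e (x + y) = e x + e y" using S unfolding superreal_emb_def by simp
  have eord: "\<And>x y. e x \<le> e y \<longleftrightarrow> x \<le> y" using S unfolding superreal_emb_def by simp
  have einj: "\<And>x y. e x = e y \<Longrightarrow> x = y"
  proof -
    fix x y assume "e x = e y"
    thus "x = y" using eord[of x y] eord[of y x] by simp
  qed
  have e0: "e 0 = 0" using eadd[of 0 0] by simp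
  have em1: "e (-1) = -1" using eadd[of 1 "-1"] e0 e1 by (simp add: eq_neg_iff_add_eq_0 add.commute)
  have J1: "J (\<lambda>_. 1) = 1" using H unfolding alg_hom_def by (elim conjE)
  have Jadd: "\<And>f g. J (\<lambda>l. f l + g l) = J f + J g" using H unfolding alg_hom_def by simp
  have Jmul: "\<And>f g. J (\<lambda>l. f l * g l) = J f * J g" using H unfolding alg_hom_def by simp
  have Jsc: "\<And>r f. J (\<lambda>l. r * f l) = e r * J f"
  proof -
    fix r f
    have "\<forall>r f. J (\<lambda>l. r * f l) = e r * J f" using H unfolding alg_hom_def by (elim conjE)
    thus "J (\<lambda>l. r * f l) = e r * J f" by (elim allE)
  qed
  have J0: "J (\<lambda>_. 0) = 0" using Jsc[of 0 "\<lambda>_. 1"] e0 by simp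
  have P0: "P {} = 0" using Padd[of "{}" "{}"] by simp
  have fi: "fin_ideal {f. J f = 0}"
    unfolding fin_ideal_def using J0 Jadd Jmul by simp
  have ne: "{f. J f = 0} \<noteq> UNIV"
  proof
    assume "{f. J f = 0} = UNIV"
    hence "(\<lambda>_. 1) \<in> {f. J f = 0}" by simp
    thus False using J1 by simp
  qed
  have max: "\<forall>K. fin_ideal K \<and> {f. J f = 0} \<subseteq> K \<longrightarrow> K = {f. J f = 0} \<or> K = UNIV"
  proof (intro allI impI)
    fix K assume K: "fin_ideal K \<and> {f. J f = 0} \<subseteq> K"
    show "K = {f. J f = 0} \<or> K = UNIV"
    proof (cases "K \<subseteq> {f. J f = 0}")
      case True then show ?thesis using K by blast
    next
      case False
      then obtain f where f: "f \<in> K" "J f \<noteq> 0" by auto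
      define g where "g = (\<lambda>l. if f l = 0 then 1 else (0::real))"
      define h where "h = (\<lambda>l. if f l = 0 then 0 else 1 / f l)"
      have "(\<lambda>l. f l * g l) = (\<lambda>_. 0)" by (auto simp: g_def)
      hence "J f * J g = 0" using Jmul[of f g] J0 by simp
      hence "J g = 0" using f by simp
      hence gK: "g \<in> K" using K by auto
      have hf: "(\<lambda>l. h l * f l) \<in> K" using K f unfolding fin_ideal_def by blast
      have Kadd: "\<forall>f\<in>K. \<forall>g\<in>K. (\<lambda>l. f l + g l) \<in> K" using K unfolding fin_ideal_def by simp
      have "(\<lambda>l. (\<lambda>l. h l * f l) l + g l) \<in> K" by (rule Kadd[rule_format, OF hf gK])
      moreover have "(\<lambda>l. (\<lambda>l. h l * f l) l + g l) = (\<lambda>_. 1)"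
        by (auto simp: g_def h_def)
      ultimately have oneK: "(\<lambda>_. 1) \<in> K" by simp
      have "\<And>k. k \<in> K"
      proof -
        fix k :: "'a fset \<Rightarrow> real"
        have Kmul: "\<forall>f\<in>K. \<forall>h. (\<lambda>l. h l * f l) \<in> K" using K unfolding fin_ideal_def by simp
        have "(\<lambda>l. k l * (\<lambda>_. 1) l) \<in> K" by (rule Kmul[rule_format, OF oneK])
        thus "k \<in> K" by simp
      qed
      thus ?thesis by auto
    qed
  qed
  have fine: "\<And>w. J (\<lambda>l. 1 - chi l w) = 0"
  proof -
    fix w :: 'a
    define x where "x = J (\<lambda>l. chi l w)"
    have "(\<lambda>l. 1 - chi l w) = (\<lambda>l. (\<lambda>_. 1) l + (\<lambda>l. (-1) * chi l w) l)" by simp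
    hence Jc: "J (\<lambda>l. 1 - chi l w) = 1 - x"
      using Jadd[of "\<lambda>_. 1" "\<lambda>l. (-1) * chi l w"] Jsc[of "-1" "\<lambda>l. chi l w"] J1 em1
      by (simp add: x_def)
    have "P UNIV = P ({w} \<union> (UNIV - {w}))" by (metis Un_Diff_cancel Un_UNIV_right)
    also have "\<dots> = P {w} + P (UNIV - {w})" by (rule Padd) auto
    finally have "P {w} + P (UNIV - {w}) = 1" using PU[of UNIV] by simp
    moreover have "P (UNIV - {w}) \<noteq> 1" using PU[of "UNIV - {w}"] by auto
    ultimately have Pw: "P {w} \<noteq> 0" by auto
    have eq: "(\<lambda>l. phi e P c {w} l * (1 - chi l w)) = phi e P c {}"
    proof
      fix l
      show "phi e P c {w} l * (1 - chi l w) = phi e P c {} l"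
      proof (cases "l = {||}")
        case True then show ?thesis by (simp add: phi_def chi_def)
      next
        case False
        have z: "phi e P c {} l = 0"
        proof -
          have "(THE r. e r = P ({} \<inter> fset l) / P (fset l)) = 0"
            proof (rule the_equality)
              show "e 0 = P ({} \<inter> fset l) / P (fset l)" using e0 P0 by simp
            next
              fix r assume "e r = P ({} \<inter> fset l) / P (fset l)"
              hence "e r = e 0" using e0 P0 by simp
              thus "r = 0" by (rule einj)
            qed
          thus ?thesis using False unfolding phi_def cond_prob_def by simp
        qed
        show ?thesis
        proof (cases "w |\<in>| l")
          case True then show ?thesis using z by (simp add: chi_def)
        next
          case nw: False
          have "{w} \<inter> fset l = {} \<inter> fset l" using nw by auto
          hence "phi e P c {w} l = phi e P c {} l" unfolding phi_def cond_prob_def by simp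
          moreover have "chi l w = 0" using nw unfolding chi_def by simp
          ultimately show ?thesis by simp
        qed
      qed
    qed
    have "P {w} * (1 - x) = P {}"
      using Jmul[of "phi e P c {w}" "\<lambda>l. 1 - chi l w"] eq Jc PJ by simp
    hence "1 - x = 0" using Pw P0 by simp
    thus "J (\<lambda>l. 1 - chi l w) = 0" using Jc by simp
  qed
  show ?thesis unfolding fine_ideal_def maximal_fin_ideal_def
    using fi ne max fine by simp
qed

end
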